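(* Let $f:[0,1]\to\mathbb{R}$ with $f(0),f(1)\in\mathbb{Z}$. (a) If $f(x)-x$ is monotone increasing on $[0,1]$, then $\widetilde{B}_n(f)$ and $\widehat{B}_n(f)$ are monotone increasing on $[0,1]$ for all $n\in\mathbb{N}_+$. (b) If $f(x)+x$ is monotone decreasing on $[0,1]$, then $\widetilde{B}_n(f)$ and $\widehat{B}_n(f)$ are monotone decreasing on $[0,1]$ for all $n\in\mathbb{N}_+$.
   Context: For $n\in\mathbb{N}_+$ and $f:[0,1]\to\mathbb{R}$, define $\widetilde{B}_n(f)(x):=\sum_{k=0}^n \left[f\left(\frac{k}{n}\right)\binom{n}{k}\right]x^k(1-x)^{n-k}$, where $[\alpha]$ is the largest integer $\le\alpha$, and $\widehat{B}_n(f)(x):=\sum_{k=0}^n \left\langle f\left(\frac{k}{n}\right)\binom{n}{k}\right\rangle x^k(1-x)^{n-k}$, where $\langle\alpha\rangle$ is the integer nearest to $\alpha$ (when $\alpha$ is a half-integer, $\langle\alpha\rangle$ may be either neighbouring integer, chosen arbitrarily; the result holds for any such choice). Monotone increasing/decreasing are meant in the non-strict sense. *)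

theory Defs
  imports "HOL-Analysis.Analysis"
begin

definition Btilde :: "nat \<Rightarrow> (real \<Rightarrow> real) \<Rightarrow> real \<Rightarrow> real" where
  "Btilde n f x = (\<Sum>k\<le>n. real_of_int \<lfloor>f (real k / real n) * real (n choose k)\<rfloor> * x ^ k * (1 - x) ^ (n - k))"

text \<open>Integer Bernstein polynomial with nearest-integer rounding, given by an arbitrary
  rounding function rnd that picks a nearest integer (at half-integers either neighbour).\<close>
definition Bhat :: "(real \<Rightarrow> int) \<Rightarrow> nat \<Rightarrow> (real \<Rightarrow> real) \<Rightarrow> real \<Rightarrow> real" where
  "Bhat rnd n f x = (\<Sum>k\<le>n. real_of_int (rnd (f (real k / real n) * real (n choose k))) * x ^ k * (1 - x) ^ (n - k))"

definition nearest_int_rounding :: "(real \<Rightarrow> int) \<Rightarrow> bool" where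
  "nearest_int_rounding rnd \<longleftrightarrow> (\<forall>a. \<bar>real_of_int (rnd a) - a\<bar> \<le> 1/2)"

end

theory Submission imports Defs begin

definition bern :: "(nat \<Rightarrow> real) \<Rightarrow> nat \<Rightarrow> real \<Rightarrow> real" where
  "bern a n x = (\<Sum>k\<le>n. a k * real (n choose k) * x ^ k * (1 - x) ^ (n - k))"

lemma bern_deriv:
  "((\<lambda>x. \<Sum>k\<le>n. c k * x^k * (1-x)^(n-k)) has_field_derivative
     (\<Sum>k\<le>n. c k * (real k * x^(k-1) * (1-x)^(n-k) - real (n-k) * x^k * (1-x)^(n-k-1)))) (at x)"
  apply (rule derivative_eq_intros refl | simp)+
  apply (rule sum.cong, simp)
  apply (simp add: algebra_simps)
  done

lemma bern_sum_shift:
  "(\<Sum>k\<le>Suc m. c k * (real k * x^(k-1) * (1-x)^(Suc m-k) - real (Suc m-k) * x^k * (1-x)^(Suc m-k-1)))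
   = (\<Sum>j\<le>m. (c (Suc j) * real (Suc j) - c j * real (Suc m - j)) * x^j * (1-x)^(m-j))"
proof -
  have "(\<Sum>k\<le>Suc m. c k * (real k * x^(k-1) * (1-x)^(Suc m-k) - real (Suc m-k) * x^k * (1-x)^(Suc m-k-1)))
     = (\<Sum>k\<le>Suc m. c k * real k * x^(k-1) * (1-x)^(Suc m-k)) - (\<Sum>k\<le>Suc m. c k * real (Suc m-k) * x^k * (1-x)^(Suc m-k-1))"
    apply (simp add: right_diff_distrib sum_subtractf mult.assoc)
    apply (rule sum.cong[OF refl])
    apply (simp add: algebra_simps)
    done
  also have "(\<Sum>k\<le>Suc m. c k * real k * x^(k-1) * (1-x)^(Suc m-k)) = (\<Sum>j\<le>m. c (Suc j) * real (Suc j) * x^j * (1-x)^(m-j))"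
    by (subst sum.atMost_Suc_shift) simp
  also have "(\<Sum>k\<le>Suc m. c k * real (Suc m-k) * x^k * (1-x)^(Suc m-k-1)) = (\<Sum>j\<le>m. c j * real (Suc m - j) * x^j * (1-x)^(m-j))"
    apply (simp only: sum.atMost_Suc)
    by simp
  finally show ?thesis by (simp add: sum_subtractf[symmetric] algebra_simps)
qed

lemma bern_mono:
  assumes "\<And>j. j < n \<Longrightarrow> a j \<le> a (Suc j)"
  shows "mono_on {0..1} (bern a n)"
proof (cases n)
  case 0
  then show ?thesis by (simp add: bern_def mono_on_def)
next
  case (Suc m)
  define c where "c k = a k * real (n choose k)" for k
  have bf: "bern a n = (\<lambda>x. \<Sum>k\<le>n. c k * x^k * (1-x)^(n-k))"
    by (simp add: bern_def c_def fun_eq_iff)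
  define D where "D x = (\<Sum>j\<le>m. (a (Suc j) - a j) * real (n * (m choose j)) * x^j * (1-x)^(m-j))" for x
  have coef: "c (Suc j) * real (Suc j) - c j * real (Suc m - j) = (a (Suc j) - a j) * real (n * (m choose j))" for j
  proof -
    have e1: "real (Suc j) * real (n choose Suc j) = real (n * (m choose j))"
      using binomial_absorption[of j n] Suc by (metis diff_Suc_1 of_nat_mult)
    have e2: "real (Suc m - j) * real (n choose j) = real (n * (m choose j))"
      using binomial_absorb_comp[of n j] Suc by (metis diff_Suc_1 of_nat_mult)
    have "c (Suc j) * real (Suc j) - c j * real (Suc m - j) = a (Suc j) * (real (Suc j) * real (n choose Suc j)) - a j * (real (Suc m - j) * real (n choose j))"
      unfolding c_def by (simp only: mult_ac)
    also have "\<dots> = (a (Suc j) - a j) * real (n * (m choose j))"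
      by (simp only: e1 e2 left_diff_distrib)
    finally show ?thesis .
  qed
  have der: "(bern a n has_field_derivative D x) (at x)" for x
  proof -
    have "(bern a n has_field_derivative (\<Sum>k\<le>n. c k * (real k * x^(k-1) * (1-x)^(n-k) - real (n-k) * x^k * (1-x)^(n-k-1)))) (at x)"
      unfolding bf by (rule bern_deriv)
    also have "(\<Sum>k\<le>n. c k * (real k * x^(k-1) * (1-x)^(n-k) - real (n-k) * x^k * (1-x)^(n-k-1))) = D x"
      by (simp only: Suc bern_sum_shift D_def coef)
    finally show ?thesis .
  qed
  have Dnn: "0 \<le> D x" if "0 \<le> x" "x \<le> 1" for x
    unfolding D_def using that assms Suc by (intro sum_nonneg mult_nonneg_nonneg) auto
  show ?thesis
  proof (rule mono_onI)
    fix r s :: real assume rs: "r \<in> {0..1}" "s \<in> {0..1}" "r \<le> s"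
    show "bern a n r \<le> bern a n s"
    proof (rule DERIV_nonneg_imp_increasing_open[OF rs(3)])
      fix x assume "r < x" "x < s"
      then show "\<exists>y. (bern a n has_real_derivative y) (at x) \<and> 0 \<le> y"
        using rs der Dnn by (intro exI[of _ "D x"]) auto
    next
      show "continuous_on {r..s} (bern a n)"
        using der by (meson DERIV_isCont continuous_at_imp_continuous_on)
    qed
  qed
qed

lemma bern_antimono:
  assumes "\<And>j. j < n \<Longrightarrow> a (Suc j) \<le> a j"
  shows "antimono_on {0..1} (bern a n)"
proof -
  have "mono_on {0..1} (bern (\<lambda>k. - a k) n)" using assms by (intro bern_mono) auto
  moreover have "bern (\<lambda>k. - a k) n = (\<lambda>x. - bern a n x)"
    by (simp add: bern_def fun_eq_iff sum_negf[symmetric])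
  ultimately show ?thesis by (auto simp: mono_on_def monotone_on_def)
qed


lemma binom_ge_n: "0 < k \<Longrightarrow> k < n \<Longrightarrow> n \<le> n choose k"
proof (induction n arbitrary: k)
  case 0 then show ?case by simp
next
  case (Suc m)
  then obtain i where i: "k = Suc i" by (cases k) auto
  show ?case
  proof (cases "i = 0")
    case True then show ?thesis using i by simp
  next
    case False
    then have "m \<le> m choose i" using Suc i by auto
    moreover have "1 \<le> m choose Suc i" using Suc i by (simp add: Suc_leI)
    ultimately show ?thesis using i by simp
  qed
qed

lemma rnd_int: assumes "nearest_int_rounding rnd" "g \<in> \<int>" shows "real_of_int (rnd g) = g"
proof -
  obtain m where m: "g = of_int m" using assms(2) Ints_cases by blast
  have "\<bar>real_of_int (rnd g - m)\<bar> \<le> 1/2" using assms(1) m unfolding nearest_int_rounding_def by simp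
  then have "rnd g - m = 0" by linarith
  then show ?thesis using m by simp
qed

lemma endpoints:
  assumes "f 0 \<in> \<int>" "f 1 \<in> \<int>" "n \<ge> 1" "k \<le> n"
  shows "(real (n choose k) = 1 \<and> f (real k / real n) \<in> \<int>) \<or> real n \<le> real (n choose k)"
proof (cases "k = 0 \<or> k = n")
  case True then show ?thesis using assms by auto
next
  case False then show ?thesis using binom_ge_n[of k n] assms by simp
qed

lemma floor_bounds:
  assumes "f 0 \<in> \<int>" "f 1 \<in> \<int>" "n \<ge> 1" "k \<le> n"
  defines "C \<equiv> real (n choose k)"
  shows "f (real k / real n) - 1 / real n \<le> real_of_int \<lfloor>f (real k / real n) * C\<rfloor> / C
       \<and> real_of_int \<lfloor>f (real k / real n) * C\<rfloor> / C \<le> f (real k / real n)"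
proof -
  define g where "g = f (real k / real n)"
  have Cpos: "C > 0" using assms(4) unfolding C_def by simp
  have n0: "real n > 0" using assms(3) by simp
  have up: "real_of_int \<lfloor>g * C\<rfloor> / C \<le> g"
    using Cpos by (simp add: divide_le_eq)
  have lo: "g - 1 / real n \<le> real_of_int \<lfloor>g * C\<rfloor> / C"
    using endpoints[OF assms(1-4)]
  proof
    assume h: "real (n choose k) = 1 \<and> f (real k / real n) \<in> \<int>"
    then have "C = 1" "g \<in> \<int>" unfolding C_def g_def by auto
    then show ?thesis using n0 by simp
  next
    assume h: "real n \<le> real (n choose k)"
    have "g * C - 1 \<le> real_of_int \<lfloor>g * C\<rfloor>" by linarith
    then have "(g * C - 1) / C \<le> real_of_int \<lfloor>g * C\<rfloor> / C" using Cpos by (simp add: divide_right_mono)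
    moreover have "(g * C - 1) / C = g - 1 / C" using Cpos by (simp add: field_simps)
    moreover have "1 / C \<le> 1 / real n" using h n0 unfolding C_def by (simp add: frac_le)
    ultimately show ?thesis by linarith
  qed
  show ?thesis using up lo unfolding g_def by simp
qed

lemma rnd_bounds:
  assumes "f 0 \<in> \<int>" "f 1 \<in> \<int>" "n \<ge> 1" "k \<le> n" "nearest_int_rounding rnd"
  defines "C \<equiv> real (n choose k)"
  shows "\<bar>real_of_int (rnd (f (real k / real n) * C)) / C - f (real k / real n)\<bar> \<le> 1 / (2 * real n)"
  using endpoints[OF assms(1-4)]
proof
  define g where "g = f (real k / real n)"
  have Cpos: "C > 0" using assms(4) unfolding C_def by simp
  have n0: "real n > 0" using assms(3) by simp
  {
    assume h: "real (n choose k) = 1 \<and> f (real k / real n) \<in> \<int>"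
    then have "C = 1" "g \<in> \<int>" unfolding C_def g_def by auto
    then show ?thesis using n0 rnd_int[OF assms(5)] unfolding g_def[symmetric] by simp
  }
  {
    assume h: "real n \<le> real (n choose k)"
    have e: "\<bar>real_of_int (rnd (g * C)) - g * C\<bar> \<le> 1/2" using assms(5) unfolding nearest_int_rounding_def by simp
    have "real_of_int (rnd (g * C)) / C - g = (real_of_int (rnd (g * C)) - g * C) / C"
      using Cpos by (simp add: field_simps)
    then have "\<bar>real_of_int (rnd (g * C)) / C - g\<bar> = \<bar>real_of_int (rnd (g * C)) - g * C\<bar> / C"
      using Cpos by simp
    also have "\<dots> \<le> (1/2) / C" using divide_right_mono[OF e, of C] Cpos by simp
    also have "\<dots> \<le> (1/2) / real n" using h n0 unfolding C_def by (simp add: frac_le)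
    finally show ?thesis unfolding g_def by simp
  }
qed

lemma Btilde_bern: "Btilde n f = bern (\<lambda>k. real_of_int \<lfloor>f (real k / real n) * real (n choose k)\<rfloor> / real (n choose k)) n"
  unfolding Btilde_def bern_def fun_eq_iff by (auto intro!: sum.cong)

lemma Bhat_bern: "Bhat rnd n f = bern (\<lambda>k. real_of_int (rnd (f (real k / real n) * real (n choose k))) / real (n choose k)) n"
  unfolding Bhat_def bern_def fun_eq_iff by (auto intro!: sum.cong)

theorem theorem1p7:
  fixes f :: "real \<Rightarrow> real" and rnd :: "real \<Rightarrow> int"
  assumes f0: "f 0 \<in> \<int>" and f1: "f 1 \<in> \<int>"
    and rnd: "nearest_int_rounding rnd"
  shows "(mono_on {0..1} (\<lambda>x. f x - x) \<longrightarrow>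
            (\<forall>n\<ge>1. mono_on {0..1} (Btilde n f) \<and> mono_on {0..1} (Bhat rnd n f)))
       \<and> (antimono_on {0..1} (\<lambda>x. f x + x) \<longrightarrow>
            (\<forall>n\<ge>1. antimono_on {0..1} (Btilde n f) \<and> antimono_on {0..1} (Bhat rnd n f)))"
proof (rule conjI; intro impI allI)
  have pts: "real k / real n \<in> {0..1}" if "k \<le> n" for k n using that by (auto simp: divide_le_eq_1)
  have step: "real (Suc j) / real n = real j / real n + 1 / real n" for j n by (simp add: add_divide_distrib)
  {
    assume M: "mono_on {0..1} (\<lambda>x. f x - x)"
    fix n :: nat assume n: "n \<ge> 1"
    have gap: "f (real j / real n) + 1 / real n \<le> f (real (Suc j) / real n)" if "j < n" for j
      using mono_onD[OF M pts[of j n] pts[of "Suc j" n]] that step[of j n] by (simp add: divide_right_mono)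
    show "mono_on {0..1} (Btilde n f) \<and> mono_on {0..1} (Bhat rnd n f)"
    proof
      show "mono_on {0..1} (Btilde n f)" unfolding Btilde_bern
      proof (rule bern_mono)
        fix j assume j: "j < n"
        show "real_of_int \<lfloor>f (real j / real n) * real (n choose j)\<rfloor> / real (n choose j)
          \<le> real_of_int \<lfloor>f (real (Suc j) / real n) * real (n choose Suc j)\<rfloor> / real (n choose Suc j)"
          using floor_bounds[OF f0 f1 n, of j] floor_bounds[OF f0 f1 n, of "Suc j"] gap[OF j] j by linarith
      qed
      show "mono_on {0..1} (Bhat rnd n f)" unfolding Bhat_bern
      proof (rule bern_mono)
        fix j assume j: "j < n"
        show "real_of_int (rnd (f (real j / real n) * real (n choose j))) / real (n choose j)
          \<le> real_of_int (rnd (f (real (Suc j) / real n) * real (n choose Suc j))) / real (n choose Suc j)"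
          using rnd_bounds[OF f0 f1 n, of j rnd] rnd_bounds[OF f0 f1 n, of "Suc j" rnd] gap[OF j] j rnd
          by (simp add: abs_le_iff)
      qed
    qed
  }
  {
    assume M: "antimono_on {0..1} (\<lambda>x. f x + x)"
    fix n :: nat assume n: "n \<ge> 1"
    have gap: "f (real (Suc j) / real n) + 1 / real n \<le> f (real j / real n)" if "j < n" for j
    proof -
      have le: "real j / real n \<le> real (Suc j) / real n" by (simp add: divide_right_mono)
      have "f (real (Suc j) / real n) + real (Suc j) / real n \<le> f (real j / real n) + real j / real n"
        using monotone_onD[OF M pts[of j n] pts[of "Suc j" n] le] that by simp
      then show ?thesis using step[of j n] by linarith
    qed
    show "antimono_on {0..1} (Btilde n f) \<and> antimono_on {0..1} (Bhat rnd n f)"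
    proof
      show "antimono_on {0..1} (Btilde n f)" unfolding Btilde_bern
      proof (rule bern_antimono)
        fix j assume j: "j < n"
        show "real_of_int \<lfloor>f (real (Suc j) / real n) * real (n choose Suc j)\<rfloor> / real (n choose Suc j)
          \<le> real_of_int \<lfloor>f (real j / real n) * real (n choose j)\<rfloor> / real (n choose j)"
          using floor_bounds[OF f0 f1 n, of j] floor_bounds[OF f0 f1 n, of "Suc j"] gap[OF j] j by linarith
      qed
      show "antimono_on {0..1} (Bhat rnd n f)" unfolding Bhat_bern
      proof (rule bern_antimono)
        fix j assume j: "j < n"
        show "real_of_int (rnd (f (real (Suc j) / real n) * real (n choose Suc j))) / real (n choose Suc j)
          \<le> real_of_int (rnd (f (real j / real n) * real (n choose j))) / real (n choose j)"
          using rnd_bounds[OF f0 f1 n, of j rnd] rnd_bounds[OF f0 f1 n, of "Suc j" rnd] gap[OF j] j rnd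
          by (simp add: abs_le_iff)
      qed
    qed
  }
qed

end
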